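(* Consider the protocol ABBBA described in the context, with $n\ge 3t+1$, in which every honest node receives an input pair $(a,b)\in\{0,1\}^2$. Then: (i) (Conditional termination) If the inputs satisfy the condition "if some honest node has $b=1$, then at least $t+1$ honest nodes have $a=1$", then every honest node eventually outputs a value and terminates. (ii) (Biased validity) If at least $t+1$ honest nodes have $b=1$, then every honest node that terminates outputs $1$. (iii) (Biased integrity) If some honest node outputs $1$, then at least one honest node has input $a=1$ or $b=1$.
   Context: Model: $n$ nodes in an asynchronous network (messages between honest nodes are eventually delivered, with arbitrary delay), at most $t$ of which are Byzantine (controlled by an adaptive adversary), $n\ge 3t+1$. Protocol ABBBA (asynchronous biased binary Byzantine agreement), code for an honest node with input $(a,b)\in\{0,1\}^2$: initialize counters $c_a=c_b=c_c=0$. Send $(\mathrm{VALUE},a,b)$ to all nodes. If $a=1$ or $b=1$, output $1$ and terminate. Otherwise wait until one of: $c_a\ge t+1$, $c_b\ge t+1$, or $c_c\ge n-t$; if $c_a\ge t+1$ or $c_b\ge t+1$, output $1$ and terminate; else (i.e. $c_c\ge n-t$) output $0$ and terminate. Counter updates: upon receiving the first message $(\mathrm{VALUE},a',b')$ with $a',b'\in\{0,1\}$ from a given node, set $c_a\leftarrow c_a+a'$, $c_b\leftarrow c_b+b'$, and if $b'=0$ set $c_c\leftarrow c_c+1$ (later VALUE messages from the same node are ignored). *)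

theory Defs
  imports Main
begin

text \<open>Nodes are 0,...,n-1.  Time is discrete (nat).
  rt i j = Some s : receiver i processes, at time s, the first well-formed
  VALUE message from sender j; rt i j = None : no such message is ever processed.
  v i j = (a', b') : the bits carried by that message (True = 1).
  For an honest sender j, v i j = (a j, b j); for a Byzantine sender it is arbitrary.\<close>

definition cnt ::
  "(nat \<Rightarrow> nat \<Rightarrow> nat option) \<Rightarrow> (nat \<Rightarrow> nat \<Rightarrow> bool \<times> bool) \<Rightarrow> nat \<Rightarrow> nat \<Rightarrow> nat
     \<Rightarrow> (bool \<times> bool \<Rightarrow> bool) \<Rightarrow> nat" where
  "cnt rt v n i \<tau> P = card {j \<in> {..<n}. \<exists>s. rt i j = Some s \<and> s \<le> \<tau> \<and> P (v i j)}"

definition c_a where "c_a rt v n i \<tau> = cnt rt v n i \<tau> fst"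
definition c_b where "c_b rt v n i \<tau> = cnt rt v n i \<tau> snd"
definition c_c where "c_c rt v n i \<tau> = cnt rt v n i \<tau> (\<lambda>p. \<not> snd p)"

definition wait_done where
  "wait_done n t rt v i \<tau> \<longleftrightarrow>
     c_a rt v n i \<tau> \<ge> t + 1 \<or> c_b rt v n i \<tau> \<ge> t + 1 \<or> c_c rt v n i \<tau> \<ge> n - t"

text \<open>Output of honest node i with inputs a i, b i (None = never terminates).\<close>
definition abbba_output ::
  "nat \<Rightarrow> nat \<Rightarrow> (nat \<Rightarrow> bool) \<Rightarrow> (nat \<Rightarrow> bool) \<Rightarrow> (nat \<Rightarrow> nat \<Rightarrow> nat option)
     \<Rightarrow> (nat \<Rightarrow> nat \<Rightarrow> bool \<times> bool) \<Rightarrow> nat \<Rightarrow> nat option" where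
  "abbba_output n t a b rt v i =
     (if a i \<or> b i then Some 1
      else if \<exists>\<tau>. wait_done n t rt v i \<tau> then
        (let \<tau>0 = (LEAST \<tau>. wait_done n t rt v i \<tau>) in
           if c_a rt v n i \<tau>0 \<ge> t + 1 \<or> c_b rt v n i \<tau>0 \<ge> t + 1 then Some 1 else Some 0)
      else None)"

text \<open>Admissible executions: Byz is the set of (ever) corrupted nodes, H the honest ones.\<close>
definition abbba_exec ::
  "nat \<Rightarrow> nat \<Rightarrow> nat set \<Rightarrow> (nat \<Rightarrow> bool) \<Rightarrow> (nat \<Rightarrow> bool) \<Rightarrow> (nat \<Rightarrow> nat \<Rightarrow> nat option)
     \<Rightarrow> (nat \<Rightarrow> nat \<Rightarrow> bool \<times> bool) \<Rightarrow> bool" where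
  "abbba_exec n t Byz a b rt v \<longleftrightarrow>
     Byz \<subseteq> {..<n} \<and> card Byz \<le> t \<and>
     (\<forall>i \<in> {..<n} - Byz. \<forall>j \<in> {..<n} - Byz. rt i j \<noteq> None \<and> v i j = (a j, b j)) \<and>
     (\<forall>i \<in> {..<n} - Byz. \<forall>j \<in> {..<n}. \<forall>k \<in> {..<n}. \<forall>s.
         j \<noteq> k \<longrightarrow> rt i j = Some s \<longrightarrow> rt i k \<noteq> Some s)"

end

theory Submission
  imports Defs
begin

lemma honest_in:
  fixes n t :: nat and S Byz :: "nat set"
  assumes "S \<subseteq> {..<n}" "card S \<ge> t + 1" "card Byz \<le> t" "Byz \<subseteq> {..<n}"
  shows "\<exists>j\<in>S. j \<in> {..<n} - Byz"
proof (rule ccontr)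
  assume "\<not> ?thesis"
  then have "S \<subseteq> Byz" using assms(1) by blast
  moreover have "finite Byz" by (rule finite_subset[OF assms(4)]) simp
  ultimately have "card S \<le> card Byz" by (simp add: card_mono)
  then show False using assms by linarith
qed

lemma cnt_ge:
  assumes "H \<subseteq> {j \<in> {..<n}. \<exists>s. rt i j = Some s \<and> s \<le> \<tau> \<and> P (v i j)}"
  shows "card H \<le> cnt rt v n i \<tau> P"
  unfolding cnt_def by (rule card_mono[OF finite_subset[OF _ finite_lessThan[of n]] assms]) blast

theorem lemma8:
  fixes n t :: nat and Byz :: "nat set" and a b :: "nat \<Rightarrow> bool"
    and rt :: "nat \<Rightarrow> nat \<Rightarrow> nat option" and v :: "nat \<Rightarrow> nat \<Rightarrow> bool \<times> bool"
  assumes "n \<ge> 3 * t + 1"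
    and "abbba_exec n t Byz a b rt v"
  shows "(((\<exists>j \<in> {..<n} - Byz. b j) \<longrightarrow> card {j \<in> {..<n} - Byz. a j} \<ge> t + 1)
           \<longrightarrow> (\<forall>i \<in> {..<n} - Byz. abbba_output n t a b rt v i \<noteq> None))
         \<and> (card {j \<in> {..<n} - Byz. b j} \<ge> t + 1
           \<longrightarrow> (\<forall>i \<in> {..<n} - Byz. abbba_output n t a b rt v i \<in> {None, Some 1}))
         \<and> ((\<exists>i \<in> {..<n} - Byz. abbba_output n t a b rt v i = Some 1)
           \<longrightarrow> (\<exists>j \<in> {..<n} - Byz. a j \<or> b j))"
proof -
  let ?H = "{..<n} - Byz"
  have E: "Byz \<subseteq> {..<n} \<and> card Byz \<le> t \<and>
     (\<forall>i \<in> ?H. \<forall>j \<in> ?H. rt i j \<noteq> None \<and> v i j = (a j, b j))"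
    using assms(2) unfolding abbba_exec_def by (elim conjE) (intro conjI)
  have B: "Byz \<subseteq> {..<n}" "card Byz \<le> t" using E by simp_all
  have D: "\<And>i j. i \<in> ?H \<Longrightarrow> j \<in> ?H \<Longrightarrow> rt i j \<noteq> None \<and> v i j = (a j, b j)"
    using E by blast
  have finB: "finite Byz" by (rule finite_subset[OF B(1)]) simp
  have cardH: "card ?H \<ge> n - t"
    using card_Diff_subset[OF finB B(1)] B(2) by simp
  have P1: "abbba_output n t a b rt v i \<noteq> None"
    if cond: "(\<exists>j \<in> ?H. b j) \<longrightarrow> card {j \<in> ?H. a j} \<ge> t + 1" and i: "i \<in> ?H" for i
  proof -
    define \<tau> where "\<tau> = Max ((\<lambda>j. the (rt i j)) ` ?H)"
    have tj: "\<And>j. j \<in> ?H \<Longrightarrow> rt i j = Some (the (rt i j)) \<and> the (rt i j) \<le> \<tau>"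
    proof -
      fix j assume j: "j \<in> ?H"
      have fin: "finite ((\<lambda>j. the (rt i j)) ` ?H)" by simp
      have "the (rt i j) \<le> \<tau>" unfolding \<tau>_def using j fin by (simp add: Max_ge)
      moreover have "rt i j \<noteq> None" using D[OF i j] by blast
      ultimately show "rt i j = Some (the (rt i j)) \<and> the (rt i j) \<le> \<tau>" by simp
    qed
    have "wait_done n t rt v i \<tau>"
    proof (cases "\<exists>j \<in> ?H. b j")
      case True
      then have c: "card {j \<in> ?H. a j} \<ge> t + 1" using cond by blast
      have "card {j \<in> ?H. a j} \<le> c_a rt v n i \<tau>" unfolding c_a_def
        apply (rule cnt_ge) using tj D[OF i] by fastforce
      then show ?thesis using c unfolding wait_done_def by linarith
    next
      case False
      have "card ?H \<le> c_c rt v n i \<tau>" unfolding c_c_def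
        apply (rule cnt_ge) using tj D[OF i] False by fastforce
      then show ?thesis using cardH unfolding wait_done_def by linarith
    qed
    then show ?thesis unfolding abbba_output_def by (auto simp: Let_def)
  qed
  have P2: "abbba_output n t a b rt v i \<in> {None, Some 1}"
    if c: "card {j \<in> ?H. b j} \<ge> t + 1" and i: "i \<in> ?H" for i
  proof -
    have "\<not> c_c rt v n i \<tau> \<ge> n - t" for \<tau>
    proof -
      let ?S = "{j \<in> {..<n}. \<exists>s. rt i j = Some s \<and> s \<le> \<tau> \<and> \<not> snd (v i j)}"
      have sub: "?S \<subseteq> {..<n} - {j \<in> ?H. b j}" using D[OF i] by auto
      have "card ?S \<le> card ({..<n} - {j \<in> ?H. b j})" by (rule card_mono[OF _ sub]) auto
      also have "\<dots> = n - card {j \<in> ?H. b j}" by (subst card_Diff_subset) auto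
      finally have f: "card ?S \<le> n - card {j \<in> ?H. b j}" .
      have "card {j \<in> ?H. b j} \<le> n" using card_mono[of "{..<n}" "{j \<in> ?H. b j}"] by auto
      then show ?thesis using c f assms(1) unfolding c_c_def cnt_def by linarith
    qed
    note nc = this
    show ?thesis
    proof (cases "\<exists>\<tau>. wait_done n t rt v i \<tau>")
      case True
      define \<tau>0 where "\<tau>0 = (LEAST \<tau>. wait_done n t rt v i \<tau>)"
      have "wait_done n t rt v i \<tau>0" unfolding \<tau>0_def using True by (rule LeastI_ex)
      then have "c_a rt v n i \<tau>0 \<ge> t + 1 \<or> c_b rt v n i \<tau>0 \<ge> t + 1"
        using nc[of \<tau>0] unfolding wait_done_def by blast
      then have "abbba_output n t a b rt v i = Some 1"
        unfolding abbba_output_def \<tau>0_def[symmetric] Let_def using True by simp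
      then show ?thesis by simp
    next
      case False then show ?thesis unfolding abbba_output_def by auto
    qed
  qed
  have P3: "\<exists>j \<in> ?H. a j \<or> b j"
    if i: "i \<in> ?H" and o: "abbba_output n t a b rt v i = Some 1" for i
  proof (cases "a i \<or> b i")
    case True then show ?thesis using i by blast
  next
    case False
    define \<tau>0 where "\<tau>0 = (LEAST \<tau>. wait_done n t rt v i \<tau>)"
    have "c_a rt v n i \<tau>0 \<ge> t + 1 \<or> c_b rt v n i \<tau>0 \<ge> t + 1"
      using o False unfolding abbba_output_def \<tau>0_def
      by (auto simp: Let_def split: if_splits)
    moreover have "\<exists>j \<in> ?H. Q (a j, b j)" if cQ: "cnt rt v n i \<tau>0 Q \<ge> t + 1" for Q
    proof -
      let ?S = "{j \<in> {..<n}. \<exists>s. rt i j = Some s \<and> s \<le> \<tau>0 \<and> Q (v i j)}"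
      have "?S \<subseteq> {..<n}" by blast
      from honest_in[OF this _ B(2) B(1)] cQ obtain j where j: "j \<in> ?S" "j \<in> ?H"
        unfolding cnt_def by blast
      have "v i j = (a j, b j)" using D[OF i j(2)] by simp
      then have "Q (a j, b j)" using j(1) by auto
      then show ?thesis using j(2) by blast
    qed
    ultimately show ?thesis unfolding c_a_def c_b_def
      proof -
        assume h: "t + 1 \<le> cnt rt v n i \<tau>0 fst \<or> t + 1 \<le> cnt rt v n i \<tau>0 snd"
          and q: "\<And>Q. t + 1 \<le> cnt rt v n i \<tau>0 Q \<Longrightarrow> \<exists>j\<in>?H. Q (a j, b j)"
        from h show ?thesis
        proof
          assume "t + 1 \<le> cnt rt v n i \<tau>0 fst"
          from q[OF this] show ?thesis by auto
        next
          assume "t + 1 \<le> cnt rt v n i \<tau>0 snd"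
          from q[OF this] show ?thesis by auto
        qed
      qed
  qed
  show ?thesis
  proof (intro conjI impI ballI)
    fix i assume "(\<exists>j \<in> ?H. b j) \<longrightarrow> card {j \<in> ?H. a j} \<ge> t + 1" "i \<in> ?H"
    then show "abbba_output n t a b rt v i \<noteq> None" by (rule P1)
  next
    fix i assume "card {j \<in> ?H. b j} \<ge> t + 1" "i \<in> ?H"
    then show "abbba_output n t a b rt v i \<in> {None, Some 1}" by (rule P2)
  next
    assume "\<exists>i \<in> ?H. abbba_output n t a b rt v i = Some 1"
    then obtain i where "i \<in> ?H" "abbba_output n t a b rt v i = Some 1" by blast
    then show "\<exists>j \<in> ?H. a j \<or> b j" by (rule P3)
  qed
qed

end
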